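(* Let $\Psi:(0,1]\to(0,\infty)$ be a decreasing function such that $s\mapsto s\Psi(s)$ is increasing and $\int_0^1\frac{ds}{s\Psi(s)}<\infty$. There is a constant $C$ depending only on $\Psi$ such that for every weight $w$ on $\mathbb{R}$ with $\mathbf{n}_\Psi(N_I^w)<\infty$ for all dyadic intervals $I\in\mathcal{D}$, and every $J\in\mathcal{D}$, \[ \sum_{I\in\mathcal{D},\,I\subset J}\mathbf{n}_\Psi(N_I^w)^{-1}(\Delta_I w)^2\,|I|\le C\,w(J), \] where in the summation the intervals $I$ on which $w\equiv 0$ are skipped.
   Context: $\mathcal{D}$ is the standard dyadic lattice of intervals $[k2^{-j},(k+1)2^{-j})$ in $\mathbb{R}$. A weight is a nonnegative locally integrable function; $w(J)=\int_J w\,dx$, $\langle w\rangle_I=\frac1{|I|}\int_I w$. For $I\in\mathcal{D}$ with left and right halves $I_-,I_+$, $\Delta_I w=\langle w\rangle_{I_+}-\langle w\rangle_{I_-}$. The normalized distribution function is $N_I^w(t)=\frac{1}{|I|}|\{x\in I:w(x)>t\}|$, and $\mathbf{n}_\Psi(N)=\int_0^\infty N(t)\Psi(N(t))\,dt$ (integrand taken as $0$ where $N(t)=0$). *)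

theory Defs
  imports "HOL-Analysis.Analysis"
begin

definition dyadic :: "int \<Rightarrow> int \<Rightarrow> real set" where
  "dyadic j k = {real_of_int k * 2 powr (- real_of_int j) ..< (real_of_int k + 1) * 2 powr (- real_of_int j)}"

definition weight :: "(real \<Rightarrow> real) \<Rightarrow> bool" where
  "weight w \<longleftrightarrow> (\<forall>x. 0 \<le> w x) \<and> (\<forall>a b. set_integrable lborel {a..b} w)"

definition wmeas :: "(real \<Rightarrow> real) \<Rightarrow> real set \<Rightarrow> real" where
  "wmeas w J = (LINT x:J|lborel. w x)"

definition avg :: "(real \<Rightarrow> real) \<Rightarrow> real set \<Rightarrow> real" where
  "avg w J = wmeas w J / measure lborel J"

text \<open>Left and right halves of dyadic (j,k) are dyadic (j+1,2k) and dyadic (j+1,2k+1).\<close>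
definition Delta :: "(real \<Rightarrow> real) \<Rightarrow> int \<Rightarrow> int \<Rightarrow> real" where
  "Delta w j k = avg w (dyadic (j+1) (2*k+1)) - avg w (dyadic (j+1) (2*k))"

definition Ndist :: "(real \<Rightarrow> real) \<Rightarrow> real set \<Rightarrow> real \<Rightarrow> real" where
  "Ndist w I t = measure lborel {x\<in>I. w x > t} / measure lborel I"

definition nPsi :: "(real \<Rightarrow> real) \<Rightarrow> (real \<Rightarrow> real) \<Rightarrow> ennreal" where
  "nPsi \<Psi> N = (\<integral>\<^sup>+ t\<in>{0<..}. ennreal (if N t = 0 then 0 else N t * \<Psi> (N t)) \<partial>lborel)"

end

theory Submission
  imports Defs
begin


definition hk :: "nat \<Rightarrow> real" where "hk k = (1/2)^k"
definition phi :: "real \<Rightarrow> real \<Rightarrow> real" where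
  "phi h s = (let u = max 0 (min s h) in u - u^2/(2*h))"

lemma phi_nonneg: "0 < (h::real) \<Longrightarrow> 0 \<le> phi h s"
proof -
  assume h: "0 < h"
  define u where "u = max 0 (min s h)"
  have "0 \<le> u" "u \<le> h" using h by (auto simp: u_def)
  hence "u*u \<le> h*u" by (simp add: mult_right_mono)
  moreover have "0 \<le> h*u" using h \<open>0 \<le> u\<close> by simp
  ultimately have "u^2 \<le> u*(2*h)" by (simp add: power2_eq_square algebra_simps)
  hence "u^2/(2*h) \<le> u" using h by (simp add: pos_divide_le_eq)
  thus ?thesis by (simp add: phi_def u_def[symmetric] Let_def)
qed

lemma phi_le_h: "0 < (h::real) \<Longrightarrow> phi h s \<le> h"
proof -
  assume h: "0 < h"
  define u where "u = max 0 (min s h)"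
  have "0 \<le> u" "u \<le> h" using h by (auto simp: u_def)
  moreover have "0 \<le> u^2/(2*h)" using h by simp
  ultimately have "u - u^2/(2*h) \<le> h" by linarith
  thus ?thesis by (simp add: phi_def u_def[symmetric] Let_def)
qed

lemma phi_le_s: "0 < (h::real) \<Longrightarrow> 0 \<le> s \<Longrightarrow> phi h s \<le> s"
proof -
  assume h: "0 < h" and s: "0 \<le> s"
  define u where "u = max 0 (min s h)"
  have "0 \<le> u" "u \<le> s" using h s by (auto simp: u_def)
  moreover have "0 \<le> u^2/(2*h)" using h by simp
  ultimately have "u - u^2/(2*h) \<le> s" by linarith
  thus ?thesis by (simp add: phi_def u_def[symmetric] Let_def)
qed

lemma g_mono: "0 < (h::real) \<Longrightarrow> 0 \<le> u \<Longrightarrow> u \<le> v \<Longrightarrow> v \<le> h \<Longrightarrow> u - u^2/(2*h) \<le> v - v^2/(2*h)"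
proof -
  assume a: "0 < h" "0 \<le> u" "u \<le> v" "v \<le> h"
  have e: "(v - v^2/(2*h)) - (u - u^2/(2*h)) = (v-u)*(1 - (u+v)/(2*h))"
    using a by (simp add: field_simps power2_eq_square)
  have "0 \<le> (v-u)*(1 - (u+v)/(2*h))" using a by (intro mult_nonneg_nonneg) (auto simp: field_simps)
  hence "0 \<le> (v - v^2/(2*h)) - (u - u^2/(2*h))" by (simp only: e)
  thus ?thesis by (simp only: diff_ge_0_iff_ge)
qed

lemma phi_mono: "0 < (h::real) \<Longrightarrow> s \<le> t \<Longrightarrow> phi h s \<le> phi h t"
  unfolding phi_def Let_def by (rule g_mono) auto

lemma g_exact: "0 < (h::real) \<Longrightarrow> (u - u^2/(2*h) + (v - v^2/(2*h)))/2 = (u+v)/2 - ((u+v)/2)^2/(2*h) - (v-u)^2/(8*h)"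
  by (simp add: field_simps power2_eq_square)

lemma phi_concave: "0 < (h::real) \<Longrightarrow> 0 \<le> a \<Longrightarrow> 0 \<le> b \<Longrightarrow> (phi h a + phi h b)/2 \<le> phi h ((a+b)/2)"
proof -
  assume h: "0 < h" and ab: "0 \<le> a" "0 \<le> b"
  define u where "u = min a h"
  define v where "v = min b h"
  have uv: "0 \<le> u" "u \<le> h" "0 \<le> v" "v \<le> h" using h ab by (auto simp: u_def v_def)
  have "max 0 (min a h) = u" "max 0 (min b h) = v" using uv by (auto simp: u_def v_def)
  hence pa: "phi h a = u - u^2/(2*h)" and pb: "phi h b = v - v^2/(2*h)" by (simp_all add: phi_def Let_def)
  have "max 0 (min ((a+b)/2) h) = min ((a+b)/2) h" using ab h by auto
  hence pm: "phi h ((a+b)/2) = min ((a+b)/2) h - (min ((a+b)/2) h)^2/(2*h)" by (simp add: phi_def Let_def)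
  have "(u+v)/2 \<le> min ((a+b)/2) h" using uv by (auto simp: u_def v_def)
  hence "(u+v)/2 - ((u+v)/2)^2/(2*h) \<le> phi h ((a+b)/2)" unfolding pm
    using uv h by (intro g_mono) auto
  moreover have "(phi h a + phi h b)/2 \<le> (u+v)/2 - ((u+v)/2)^2/(2*h)"
    unfolding pa pb g_exact[OF h] using h by simp
  ultimately show ?thesis by (rule order_trans[rotated])
qed

lemma phi_val: "0 < (h::real) \<Longrightarrow> 0 \<le> a \<Longrightarrow> a \<le> h \<Longrightarrow> phi h a = a - a^2/(2*h)"
proof -
  assume a: "0 < h" "0 \<le> a" "a \<le> h"
  have "max 0 (min a h) = a" using a by (simp only: min_absorb1[OF a(3)] max_absorb2[OF a(2)])
  thus ?thesis unfolding phi_def Let_def by (simp only:)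
qed

lemma phi_exact: "0 < (h::real) \<Longrightarrow> 0 \<le> a \<Longrightarrow> a \<le> h \<Longrightarrow> 0 \<le> b \<Longrightarrow> b \<le> h \<Longrightarrow>
   phi h ((a+b)/2) - (phi h a + phi h b)/2 = (b-a)^2/(8*h)"
proof -
  assume a: "0 < h" "0 \<le> a" "a \<le> h" "0 \<le> b" "b \<le> h"
  have e: "phi h a = a - a^2/(2*h)" "phi h b = b - b^2/(2*h)" "phi h ((a+b)/2) = (a+b)/2 - ((a+b)/2)^2/(2*h)"
    using a by (auto intro!: phi_val)
  have "(phi h a + phi h b)/2 = phi h ((a+b)/2) - (b-a)^2/(8*h)" unfolding e by (rule g_exact[OF a(1), of a b])
  thus ?thesis by linarith
qed


lemma hk_pos: "0 < hk k" by (simp add: hk_def)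
lemma hk_le1: "hk k \<le> 1" by (simp add: hk_def power_le_one)

definition FF :: "(nat \<Rightarrow> real) \<Rightarrow> real \<Rightarrow> real" where
  "FF c s = (\<Sum>k. c k * phi (hk k) s)"

lemma summable_FF:
  assumes "summable c" "\<And>k. 0 \<le> c k"
  shows "summable (\<lambda>k. c k * phi (hk k) s)"
proof (rule summable_comparison_test'[OF assms(1)])
  fix k :: nat
  have "0 \<le> phi (hk k) s" "phi (hk k) s \<le> 1"
    using phi_nonneg[OF hk_pos] phi_le_h[OF hk_pos, of k s] hk_le1[of k] by auto
  thus "norm (c k * phi (hk k) s) \<le> c k" using assms(2)[of k]
    by (simp add: abs_mult mult_left_le)
qed

lemma FF_mono:
  assumes "summable c" "\<And>k. 0 \<le> c k" "s \<le> t"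
  shows "FF c s \<le> FF c t"
  unfolding FF_def
  by (rule suminf_le[OF _ summable_FF[OF assms(1,2)] summable_FF[OF assms(1,2)]])
     (simp add: assms(2) mult_left_mono phi_mono[OF hk_pos assms(3)])

lemma FF_nonneg:
  assumes "summable c" "\<And>k. 0 \<le> c k"
  shows "0 \<le> FF c s"
  unfolding FF_def
  by (rule suminf_nonneg[OF summable_FF[OF assms(1,2)]]) (simp add: assms(2) phi_nonneg[OF hk_pos])

lemma FF_le:
  assumes "summable c" "\<And>k. 0 \<le> c k" "0 \<le> s"
  shows "FF c s \<le> suminf c * s"
proof -
  have "FF c s \<le> (\<Sum>k. c k * s)" unfolding FF_def
    by (rule suminf_le[OF _ summable_FF[OF assms(1,2)] summable_mult2[OF assms(1)]])
       (simp add: assms(2) mult_left_mono phi_le_s[OF hk_pos assms(3)])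
  also have "\<dots> = suminf c * s" by (rule suminf_mult2[OF assms(1), symmetric])
  finally show ?thesis .
qed

lemma FF_defect:
  assumes "summable c" "\<And>k. 0 \<le> c k" "0 \<le> a" "0 \<le> b"
  shows "c k0 * (phi (hk k0) ((a+b)/2) - (phi (hk k0) a + phi (hk k0) b)/2)
           \<le> FF c ((a+b)/2) - (FF c a + FF c b)/2"
proof -
  let ?d = "\<lambda>k. c k * (phi (hk k) ((a+b)/2) - (phi (hk k) a + phi (hk k) b)/2)"
  note sa = summable_FF[OF assms(1,2), of a] and sb = summable_FF[OF assms(1,2), of b]
    and sm = summable_FF[OF assms(1,2), of "(a+b)/2"]
  have sab: "summable (\<lambda>k. (c k * phi (hk k) a + c k * phi (hk k) b)/2)"
    by (intro summable_divide summable_add sa sb)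
  have "FF c ((a+b)/2) - (FF c a + FF c b)/2 = (\<Sum>k. c k * phi (hk k) ((a+b)/2)) - (\<Sum>k. (c k * phi (hk k) a + c k * phi (hk k) b)/2)"
    unfolding FF_def by (simp add: suminf_add[OF sa sb] suminf_divide[OF summable_add[OF sa sb]])
  also have "\<dots> = (\<Sum>k. ?d k)"
    by (subst suminf_diff[OF sm sab]) (simp add: algebra_simps)
  finally have eq: "FF c ((a+b)/2) - (FF c a + FF c b)/2 = (\<Sum>k. ?d k)" .
  have sd: "summable ?d"
    using summable_diff[OF sm sab] by (simp add: algebra_simps)
  have nn: "\<And>k. 0 \<le> ?d k"
    using assms(2) phi_concave[OF hk_pos assms(3,4)] by (simp add: mult_nonneg_nonneg)
  have "sum ?d {k0} \<le> suminf ?d" by (rule sum_le_suminf[OF sd]) (use nn in auto)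
  thus ?thesis using eq by simp
qed


definition ht :: "(real \<Rightarrow> real) \<Rightarrow> real \<Rightarrow> real" where
  "ht \<Psi> s = (if s = 0 then 0 else s * \<Psi> s)"

lemma exists_scale:
  assumes "0 < x" "x < 1"
  shows "\<exists>k. x \<le> hk k \<and> hk k < 2*x"
proof -
  obtain n where n: "(1/2::real)^n < x" using real_arch_pow_inv[OF assms(1), of "1/2"] by auto
  define n0 where "n0 = (LEAST n. (1/2::real)^n < x)"
  have n0: "(1/2::real)^n0 < x" unfolding n0_def by (rule LeastI[of _ n], rule n)
  have "n0 \<noteq> 0" using n0 assms(2) by (cases "n0 = 0") auto
  then obtain k where k: "n0 = Suc k" by (cases n0) auto
  have "\<not> (1/2::real)^k < x" using not_less_Least[of k "\<lambda>n. (1/2::real)^n < x"] k n0_def by auto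
  hence "x \<le> hk k" by (simp add: hk_def)
  moreover have "hk k < 2*x" using n0 k by (simp add: hk_def)
  ultimately show ?thesis by blast
qed

lemma key_sq:
  fixes \<Psi> :: "real \<Rightarrow> real"
  assumes pos: "\<forall>s. 0 < s \<and> s \<le> 1 \<longrightarrow> 0 < \<Psi> s"
    and decr: "\<forall>s t. 0 < s \<and> s \<le> t \<and> t \<le> 1 \<longrightarrow> \<Psi> t \<le> \<Psi> s"
    and c: "c = (\<lambda>k. 1 / \<Psi> (hk k))" and sc: "summable c"
    and ab: "0 \<le> a" "a \<le> 1" "0 \<le> b" "b \<le> 1"
  shows "(b-a)^2 \<le> 32 * ht \<Psi> ((a+b)/2) * (FF c ((a+b)/2) - (FF c a + FF c b)/2)"
proof -
  have cnn: "\<And>k. 0 \<le> c k" using pos hk_pos hk_le1 unfolding c by (simp add: less_imp_le)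
  define m where "m = (a+b)/2"
  show ?thesis
  proof (cases "m = 0")
    case True
    hence "a = 0" "b = 0" using ab m_def by auto
    thus ?thesis by (simp add: ht_def)
  next
    case False
    hence mpos: "0 < m" using ab m_def by auto
    have "\<exists>k. max a b \<le> hk k \<and> m \<le> hk k \<and> hk k \<le> 4*m"
    proof (cases "2*m < 1")
      case True
      obtain k where k: "2*m \<le> hk k" "hk k < 2*(2*m)" using exists_scale[of "2*m"] True mpos by auto
      thus ?thesis using ab m_def by (intro exI[of _ k]) auto
    next
      case False
      thus ?thesis using ab m_def by (intro exI[of _ 0]) (auto simp: hk_def)
    qed
    then obtain k where k: "a \<le> hk k" "b \<le> hk k" "m \<le> hk k" "hk k \<le> 4*m" by auto
    define h where "h = hk k"
    have hpos: "0 < h" and h1: "h \<le> 1" using hk_pos hk_le1 h_def by auto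
    have Ph: "0 < \<Psi> h" using pos hpos h1 by auto
    have Pm: "\<Psi> h \<le> \<Psi> m" using decr mpos k(3) h1 h_def by auto
    have def_k: "phi h m - (phi h a + phi h b)/2 = (b-a)^2/(8*h)"
      unfolding m_def h_def by (rule phi_exact[OF hk_pos ab(1) k(1) ab(3) k(2)])
    have "c k * (phi h m - (phi h a + phi h b)/2) \<le> FF c m - (FF c a + FF c b)/2"
      unfolding m_def h_def by (rule FF_defect[OF sc cnn ab(1) ab(3)])
    hence D0: "c k * ((b-a)^2/(8*h)) \<le> FF c m - (FF c a + FF c b)/2"
      by (simp only: def_k)
    have "c k * ((b-a)^2/(8*h)) = (b-a)^2/(8*h*\<Psi> h)" by (simp add: c h_def)
    with D0 have D: "(b-a)^2/(8*h*\<Psi> h) \<le> FF c m - (FF c a + FF c b)/2" by simp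
    have X: "0 \<le> (b-a)^2" by simp
    have "h * \<Psi> h \<le> 4 * m * \<Psi> m"
    proof -
      have "h * \<Psi> h \<le> 4*m * \<Psi> h" using k(4) Ph h_def by (intro mult_right_mono) auto
      also have "\<dots> \<le> 4*m*\<Psi> m" using Pm mpos by (intro mult_left_mono) auto
      finally show ?thesis .
    qed
    hence hX: "h * \<Psi> h * (b-a)^2 \<le> 4 * m * \<Psi> m * (b-a)^2" using X by (rule mult_right_mono)
    have "(b-a)^2 \<le> 32 * (m * \<Psi> m) * ((b-a)^2/(8*h*\<Psi> h))"
      using hpos Ph hX by (simp add: field_simps)
    also have "\<dots> \<le> 32 * (m * \<Psi> m) * (FF c m - (FF c a + FF c b)/2)"
      using D mpos Pm Ph by (intro mult_left_mono) auto
    finally show ?thesis using False by (simp add: ht_def m_def)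
  qed
qed

lemma amgm:
  fixes x H G lam cc :: real
  assumes "x^2 \<le> cc * H * G" "0 \<le> H" "0 \<le> G" "0 < lam" "0 < cc"
  shows "\<bar>x\<bar> \<le> lam * cc * G / 2 + H / (2*lam)"
proof -
  have "(lam * cc * G / 2 + H / (2*lam))^2 - cc * H * G = (lam * cc * G / 2 - H / (2*lam))^2"
    using assms(4) by (simp add: power2_eq_square field_simps)
  hence "cc*H*G \<le> (lam * cc * G / 2 + H / (2*lam))^2" by (metis diff_ge_0_iff_ge zero_le_power2)
  hence "\<bar>x\<bar>^2 \<le> (lam * cc * G / 2 + H / (2*lam))^2" using assms(1) by simp
  moreover have "0 \<le> lam * cc * G / 2 + H / (2*lam)" using assms by simp
  ultimately show ?thesis by (rule power2_le_imp_le)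
qed

lemma key_point:
  fixes \<Psi> :: "real \<Rightarrow> real"
  assumes pos: "\<forall>s. 0 < s \<and> s \<le> 1 \<longrightarrow> 0 < \<Psi> s"
    and decr: "\<forall>s t. 0 < s \<and> s \<le> t \<and> t \<le> 1 \<longrightarrow> \<Psi> t \<le> \<Psi> s"
    and c: "c = (\<lambda>k. 1 / \<Psi> (hk k))" and sc: "summable c"
    and ab: "0 \<le> a" "a \<le> 1" "0 \<le> b" "b \<le> 1" and lam: "0 < lam"
  shows "\<bar>b-a\<bar> + (lam*16) * ((FF c a + FF c b)/2) \<le> (lam*16) * FF c ((a+b)/2) + ht \<Psi> ((a+b)/2) / (2*lam)"
proof -
  have cnn: "\<And>k. 0 \<le> c k" using pos hk_pos hk_le1 unfolding c by (simp add: less_imp_le)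
  have G: "0 \<le> FF c ((a+b)/2) - (FF c a + FF c b)/2"
    using FF_defect[OF sc cnn ab(1) ab(3), of 0] phi_concave[OF hk_pos ab(1) ab(3), of 0] cnn[of 0]
    by (smt (verit) mult_nonneg_nonneg)
  have H: "0 \<le> ht \<Psi> ((a+b)/2)" using pos ab by (auto simp: ht_def intro!: mult_nonneg_nonneg less_imp_le)
  have "\<bar>b-a\<bar> \<le> lam * 32 * (FF c ((a+b)/2) - (FF c a + FF c b)/2) / 2 + ht \<Psi> ((a+b)/2) / (2*lam)"
    by (rule amgm[OF _ H G lam]) (use key_sq[OF pos decr c sc ab] in \<open>simp_all add: mult_ac\<close>)
  moreover have "lam * 32 * (FF c ((a+b)/2) - (FF c a + FF c b)/2) / 2 = (lam*16) * FF c ((a+b)/2) - (lam*16) * ((FF c a + FF c b)/2)"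
    by (simp add: field_simps)
  ultimately show ?thesis by linarith
qed


lemma hk_Suc: "hk (Suc k) = hk k / 2" by (simp add: hk_def)

lemma hk_anti: "k \<le> k' \<Longrightarrow> hk k' \<le> hk k"
  unfolding hk_def by (rule power_decreasing) auto

lemma piece_unique:
  assumes "s \<in> {hk (Suc k)<..hk k}" "s \<in> {hk (Suc k')<..hk k'}"
  shows "k = k'"
proof (rule ccontr)
  assume "k \<noteq> k'"
  hence "Suc k \<le> k' \<or> Suc k' \<le> k" by auto
  thus False
  proof
    assume "Suc k \<le> k'" hence "hk k' \<le> hk (Suc k)" by (rule hk_anti)
    thus False using assms by auto
  next
    assume "Suc k' \<le> k" hence "hk k \<le> hk (Suc k')" by (rule hk_anti)
    thus False using assms by auto
  qed
qed

lemma summable_c: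
  fixes \<Psi> :: "real \<Rightarrow> real"
  assumes pos: "\<forall>s. 0 < s \<and> s \<le> 1 \<longrightarrow> 0 < \<Psi> s"
    and incr: "\<forall>s t. 0 < s \<and> s \<le> t \<and> t \<le> 1 \<longrightarrow> s * \<Psi> s \<le> t * \<Psi> t"
    and intfin: "(\<integral>\<^sup>+ s\<in>{0<..1}. ennreal (1 / (s * \<Psi> s)) \<partial>lborel) < \<infinity>"
  shows "summable (\<lambda>k. 1 / \<Psi> (hk k))"
proof -
  define L where "L = (\<integral>\<^sup>+ s\<in>{0<..1}. ennreal (1 / (s * \<Psi> s)) \<partial>lborel)"
  obtain r where r: "L = ennreal r" "0 \<le> r" using intfin unfolding L_def[symmetric]
    by (cases L) auto
  have Ppos: "\<And>k. 0 < \<Psi> (hk k)" using pos hk_pos hk_le1 by auto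
  define v where "v = (\<lambda>k. 1 / (hk k * \<Psi> (hk k)))"
  define P where "P = (\<lambda>k. {hk (Suc k)<..hk k})"
  have bound: "(\<Sum>k<n. 1 / (2 * \<Psi> (hk k))) \<le> r" for n
  proof -
    define g where "g = (\<lambda>s. \<Sum>k<n. ennreal (v k) * indicator (P k) s)"
    have "(\<integral>\<^sup>+ s. g s \<partial>lborel) = (\<Sum>k<n. ennreal (v k) * emeasure lborel (P k))"
      unfolding g_def by (subst nn_integral_sum) (auto simp: P_def nn_integral_cmult_indicator)
    also have "\<dots> = (\<Sum>k<n. ennreal (1 / (2 * \<Psi> (hk k))))"
    proof (rule sum.cong[OF refl])
      fix k
      have "emeasure lborel (P k) = ennreal (hk k / 2)" unfolding P_def hk_Suc
        using hk_pos[of k] by simp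
      moreover have "v k * (hk k / 2) = 1 / (2 * \<Psi> (hk k))" using hk_pos[of k] Ppos[of k]
        by (simp add: v_def field_simps)
      moreover have "0 \<le> v k" using hk_pos[of k] Ppos[of k] by (simp add: v_def)
      ultimately show "ennreal (v k) * emeasure lborel (P k) = ennreal (1 / (2 * \<Psi> (hk k)))"
        using hk_pos[of k] by (simp add: ennreal_mult'[symmetric] mult.commute)
    qed
    also have "\<dots> = ennreal (\<Sum>k<n. 1 / (2 * \<Psi> (hk k)))"
      using Ppos by (intro sum_ennreal) (simp add: less_imp_le)
    finally have I: "(\<integral>\<^sup>+ s. g s \<partial>lborel) = ennreal (\<Sum>k<n. 1 / (2 * \<Psi> (hk k)))" .
    have "(\<integral>\<^sup>+ s. g s \<partial>lborel) \<le> L" unfolding L_def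
    proof (rule nn_integral_mono)
      fix s
      show "g s \<le> ennreal (1 / (s * \<Psi> s)) * indicator {0<..1} s"
      proof (cases "\<exists>k0. s \<in> P k0")
        case False
        hence "g s = 0" by (simp add: g_def)
        thus ?thesis by simp
      next
        case True
        then obtain k0 where k0: "s \<in> P k0" by blast
        have "\<And>k. k \<noteq> k0 \<Longrightarrow> s \<notin> P k" using piece_unique k0 unfolding P_def by blast
        hence "g s = (\<Sum>k<n. if k = k0 then ennreal (v k0) else 0)"
          unfolding g_def using k0 by (intro sum.cong) (auto simp: indicator_def)
        also have "\<dots> \<le> ennreal (v k0)" by (simp add: sum.delta)
        also have "\<dots> \<le> ennreal (1 / (s * \<Psi> s))"
        proof -
          have s: "0 < s" "s \<le> hk k0" using k0 hk_pos[of "Suc k0"] by (auto simp: P_def)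
          have "s * \<Psi> s \<le> hk k0 * \<Psi> (hk k0)" using incr s hk_le1[of k0] by auto
          moreover have "0 < s * \<Psi> s" using pos s hk_le1[of k0] by auto
          ultimately have "v k0 \<le> 1 / (s * \<Psi> s)" unfolding v_def
            by (intro divide_left_mono) auto
          thus ?thesis by (rule ennreal_leI)
        qed
        also have "\<dots> = ennreal (1 / (s * \<Psi> s)) * indicator {0<..1} s"
          using k0 hk_pos[of "Suc k0"] hk_le1[of k0] by (auto simp: P_def indicator_def)
        finally show ?thesis .
      qed
    qed
    thus ?thesis using I r by simp
  qed
  show ?thesis
  proof (rule summableI_nonneg_bounded[where x = "2*r"])
    fix k show "0 \<le> 1 / \<Psi> (hk k)" using Ppos[of k] by simp
  next
    fix n
    have "(\<Sum>k<n. 1 / \<Psi> (hk k)) = 2 * (\<Sum>k<n. 1 / (2 * \<Psi> (hk k)))"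
      by (simp add: sum_distrib_left)
    thus "(\<Sum>k<n. 1 / \<Psi> (hk k)) \<le> 2 * r" using bound[of n] by simp
  qed
qed


lemma weight_meas:
  assumes "weight w"
  shows "w \<in> borel_measurable lborel"
proof (rule borel_measurable_LIMSEQ_real)
  fix i :: nat
  have "set_integrable lborel {- real i..real i} w" using assms by (simp add: weight_def)
  hence "(\<lambda>x. indicator {- real i..real i} x *\<^sub>R w x) \<in> borel_measurable lborel"
    unfolding set_integrable_def by (rule borel_measurable_integrable)
  thus "(\<lambda>x. indicator {- real i..real i} x * w x) \<in> borel_measurable lborel"
    by simp
next
  fix x :: real
  obtain N :: nat where N: "\<bar>x\<bar> \<le> real N" using real_arch_simple by blast
  have "eventually (\<lambda>i. indicator {- real i..real i} x * w x = w x) sequentially"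
    unfolding eventually_sequentially
  proof (intro exI allI impI)
    fix i assume "N \<le> i"
    hence "real N \<le> real i" by simp
    hence "x \<in> {- real i..real i}" using N by auto
    thus "indicator {- real i..real i} x * w x = w x" by simp
  qed
  thus "(\<lambda>i. indicator {- real i..real i} x * w x) \<longlonglongrightarrow> w x"
    by (rule tendsto_eventually)
qed

definition pw :: "int \<Rightarrow> real" where "pw j = 2 powr (- real_of_int j)"

lemma pw_pos: "0 < pw j" by (simp add: pw_def)
lemma pw_Suc: "pw (j+1) = pw j / 2"
proof -
  have e: "- real_of_int (j+1) = - real_of_int j - 1" by simp
  have "pw (j+1) = 2 powr (- real_of_int j - 1)" unfolding pw_def e ..
  also have "\<dots> = pw j / 2" by (simp add: pw_def powr_diff)
  finally show ?thesis .
qed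

lemma dyadic_eq: "dyadic j k = {real_of_int k * pw j ..< (real_of_int k + 1) * pw j}"
  by (simp add: dyadic_def pw_def)

lemma dyadic_sets: "dyadic j k \<in> sets lborel"
  unfolding dyadic_eq by simp

lemma emeasure_dyadic: "emeasure lborel (dyadic j k) = ennreal (pw j)"
  using pw_pos[of j] by (simp add: dyadic_eq algebra_simps)

lemma measure_dyadic: "measure lborel (dyadic j k) = pw j"
  using emeasure_dyadic[of j k] pw_pos[of j] by (simp add: measure_def)

lemma dyadic_fmeas: "dyadic j k \<in> fmeasurable lborel"
  using emeasure_dyadic[of j k] dyadic_sets[of j k] by (simp add: fmeasurable_def)

lemma dyadic_halves:
  "dyadic j k = dyadic (j+1) (2*k) \<union> dyadic (j+1) (2*k+1)"
  "dyadic (j+1) (2*k) \<inter> dyadic (j+1) (2*k+1) = {}"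
proof -
  have a: "real_of_int (2*k) * pw (j+1) = real_of_int k * pw j" by (simp add: pw_Suc)
  have b: "(real_of_int (2*k) + 1) * pw (j+1) = real_of_int (2*k+1) * pw (j+1)" by simp
  have c: "(real_of_int (2*k+1) + 1) * pw (j+1) = (real_of_int k + 1) * pw j" unfolding pw_Suc by (simp add: field_simps)
  have m1: "real_of_int k * pw j \<le> real_of_int (2*k+1) * pw (j+1)"
    unfolding pw_Suc using pw_pos[of j] by (simp add: field_simps)
  have m2: "real_of_int (2*k+1) * pw (j+1) \<le> (real_of_int k + 1) * pw j"
    unfolding pw_Suc using pw_pos[of j] by (simp add: field_simps)
  show "dyadic j k = dyadic (j+1) (2*k) \<union> dyadic (j+1) (2*k+1)"
    unfolding dyadic_eq a b c using m1 m2 by auto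
  show "dyadic (j+1) (2*k) \<inter> dyadic (j+1) (2*k+1) = {}"
    unfolding dyadic_eq b by auto
qed

lemma dyadic_bounded: "\<exists>a b. dyadic j k \<subseteq> {a..b}"
  unfolding dyadic_eq by (intro exI[of _ "real_of_int k * pw j"] exI[of _ "(real_of_int k + 1) * pw j"]) auto

lemma layer_cake:
  fixes g :: "real \<Rightarrow> real"
  assumes g[measurable]: "g \<in> borel_measurable lborel" and gnn: "\<And>x. 0 \<le> g x"
    and S[measurable]: "S \<in> sets lborel"
  shows "(\<integral>\<^sup>+x. ennreal (g x) * indicator S x \<partial>lborel)
       = (\<integral>\<^sup>+t. emeasure lborel {x\<in>S. t < g x} * indicator {0<..} t \<partial>lborel)"
proof -
  define f where "f = (\<lambda>x t. indicator {p. fst p \<in> S \<and> 0 < snd p \<and> snd p < g (fst p)} (x,t) :: ennreal)"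
  have fm: "case_prod f \<in> borel_measurable (lborel \<Otimes>\<^sub>M lborel)"
  proof -
    have [measurable]: "S \<in> sets borel" using S by simp
    have [measurable]: "g \<in> borel_measurable borel" using g by simp
    have "Measurable.pred (lborel \<Otimes>\<^sub>M lborel) (\<lambda>p. fst p \<in> S \<and> 0 < snd p \<and> snd p < g (fst p))"
      by measurable
    hence "{p \<in> space (lborel \<Otimes>\<^sub>M lborel). fst p \<in> S \<and> 0 < snd p \<and> snd p < g (fst p)} \<in> sets (lborel \<Otimes>\<^sub>M lborel)"
      unfolding pred_def by simp
    hence "{p. fst p \<in> S \<and> 0 < snd p \<and> snd p < g (fst p)} \<in> sets (lborel \<Otimes>\<^sub>M lborel)"
      by (simp add: space_pair_measure)
    thus ?thesis unfolding f_def by simp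
  qed
  have "\<And>x. ennreal (g x) * indicator S x = (\<integral>\<^sup>+t. f x t \<partial>lborel)"
  proof -
    fix x
    have "(\<integral>\<^sup>+t. f x t \<partial>lborel) = (\<integral>\<^sup>+t. indicator S x * indicator {0<..<g x} t \<partial>lborel)"
      by (intro nn_integral_cong) (auto simp: f_def indicator_def)
    also have "\<dots> = indicator S x * emeasure lborel {0<..<g x}"
      by (subst nn_integral_cmult_indicator) auto
    also have "\<dots> = ennreal (g x) * indicator S x" using gnn[of x] by (simp add: mult.commute)
    finally show "ennreal (g x) * indicator S x = (\<integral>\<^sup>+t. f x t \<partial>lborel)" ..
  qed
  hence "(\<integral>\<^sup>+x. ennreal (g x) * indicator S x \<partial>lborel) = (\<integral>\<^sup>+x. \<integral>\<^sup>+t. f x t \<partial>lborel \<partial>lborel)"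
    by simp
  also have "\<dots> = (\<integral>\<^sup>+t. \<integral>\<^sup>+x. f x t \<partial>lborel \<partial>lborel)"
    by (rule lborel_pair.Fubini'[OF fm, symmetric])
  also have "\<dots> = (\<integral>\<^sup>+t. emeasure lborel {x\<in>S. t < g x} * indicator {0<..} t \<partial>lborel)"
  proof (rule nn_integral_cong)
    fix t :: real
    have "(\<integral>\<^sup>+x. f x t \<partial>lborel) = (\<integral>\<^sup>+x. indicator {x\<in>S. t < g x} x * indicator {0<..} t \<partial>lborel)"
      by (intro nn_integral_cong) (auto simp: f_def indicator_def)
    also have "\<dots> = emeasure lborel {x\<in>S. t < g x} * indicator {0<..} t"
      by (subst nn_integral_multc) auto
    finally show "(\<integral>\<^sup>+x. f x t \<partial>lborel) = emeasure lborel {x\<in>S. t < g x} * indicator {0<..} t" .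
  qed
  finally show ?thesis .
qed


lemma anti_meas:
  fixes f :: "real \<Rightarrow> real"
  assumes "\<And>t t'. t \<le> t' \<Longrightarrow> f t' \<le> f t"
  shows "f \<in> borel_measurable lborel"
proof -
  have "mono (\<lambda>t. - f t)" using assms by (auto simp: mono_def)
  hence "(\<lambda>t. - f t) \<in> borel_measurable borel" by (rule borel_measurable_mono)
  hence "(\<lambda>t. - (- f t)) \<in> borel_measurable borel" by (rule borel_measurable_uminus)
  thus ?thesis by simp
qed

lemma lev_sets:
  assumes "weight w"
  shows "{x\<in>dyadic j k. t < w x} \<in> sets lborel"
proof -
  have [measurable]: "w \<in> borel_measurable borel" using weight_meas[OF assms] by simp
  have [measurable]: "dyadic j k \<in> sets borel" using dyadic_sets by simp
  have "{x\<in>space borel. x \<in> dyadic j k \<and> t < w x} \<in> sets borel" by measurable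
  thus ?thesis by simp
qed

lemma dyadic_sets_b: "dyadic j k \<in> sets borel"
  using dyadic_sets[of j k] by simp

lemma lev_sets_b: "weight w \<Longrightarrow> {x\<in>dyadic j k. t < w x} \<in> sets borel"
  using lev_sets[of w j k t] by simp

lemma lev_emeas_fin:
  assumes "weight w"
  shows "emeasure lborel {x\<in>dyadic j k. t < w x} \<noteq> \<infinity>"
proof -
  have "emeasure lborel {x\<in>dyadic j k. t < w x} \<le> emeasure lborel (dyadic j k)"
    by (rule emeasure_mono) (auto simp: dyadic_sets_b)
  thus ?thesis using emeasure_dyadic[of j k] by (auto simp: top_unique)
qed

lemma Nd_range:
  assumes "weight w"
  shows "0 \<le> Ndist w (dyadic j k) t" "Ndist w (dyadic j k) t \<le> 1"
proof -
  have "measure lborel {x\<in>dyadic j k. t < w x} \<le> measure lborel (dyadic j k)"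
    by (rule measure_mono_fmeasurable) (auto simp: lev_sets_b[OF assms] dyadic_fmeas)
  thus "0 \<le> Ndist w (dyadic j k) t" "Ndist w (dyadic j k) t \<le> 1"
    using pw_pos[of j] by (auto simp: Ndist_def measure_dyadic)
qed

lemma Nd_anti:
  assumes "weight w" "t \<le> t'"
  shows "Ndist w (dyadic j k) t' \<le> Ndist w (dyadic j k) t"
proof -
  have "measure lborel {x\<in>dyadic j k. t' < w x} \<le> measure lborel {x\<in>dyadic j k. t < w x}"
  proof (rule measure_mono_fmeasurable)
    show "{x\<in>dyadic j k. t' < w x} \<subseteq> {x\<in>dyadic j k. t < w x}" using assms(2) by auto
    show "{x\<in>dyadic j k. t' < w x} \<in> sets lborel" by (rule lev_sets[OF assms(1)])
    have "emeasure lborel {x\<in>dyadic j k. t < w x} < \<infinity>"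
      using lev_emeas_fin[OF assms(1), of j k t] by (simp add: less_top)
    thus "{x\<in>dyadic j k. t < w x} \<in> fmeasurable lborel"
      using lev_sets[OF assms(1), of j k t] by (simp add: fmeasurable_def)
  qed
  thus ?thesis using pw_pos[of j] by (auto simp: Ndist_def measure_dyadic divide_right_mono)
qed

lemma Nd_meas:
  assumes "weight w"
  shows "(\<lambda>t. Ndist w (dyadic j k) t) \<in> borel_measurable lborel"
  by (rule anti_meas) (rule Nd_anti[OF assms])

lemma Nd_half:
  assumes "weight w"
  shows "Ndist w (dyadic j k) t = (Ndist w (dyadic (j+1) (2*k)) t + Ndist w (dyadic (j+1) (2*k+1)) t) / 2"
proof -
  have "{x\<in>dyadic j k. t < w x} = {x\<in>dyadic (j+1) (2*k). t < w x} \<union> {x\<in>dyadic (j+1) (2*k+1). t < w x}"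
    using dyadic_halves(1)[of j k] by blast
  moreover have "{x\<in>dyadic (j+1) (2*k). t < w x} \<inter> {x\<in>dyadic (j+1) (2*k+1). t < w x} = {}"
    using dyadic_halves(2)[of j k] by blast
  ultimately have "measure lborel {x\<in>dyadic j k. t < w x} =
      measure lborel {x\<in>dyadic (j+1) (2*k). t < w x} + measure lborel {x\<in>dyadic (j+1) (2*k+1). t < w x}"
    using measure_Union[OF lev_emeas_fin[OF assms, of "j+1" "2*k" t] lev_emeas_fin[OF assms, of "j+1" "2*k+1" t]
       lev_sets[OF assms, of "j+1" "2*k" t] lev_sets[OF assms, of "j+1" "2*k+1" t]] by simp
  thus ?thesis using pw_pos[of j]
    by (simp add: Ndist_def measure_dyadic pw_Suc add_divide_distrib)
qed

lemma Nd_int: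
  assumes w: "weight w"
  shows "(\<integral>\<^sup>+t. ennreal (Ndist w (dyadic j k) t) * indicator {0<..} t \<partial>lborel) = ennreal (avg w (dyadic j k))"
proof -
  let ?X = "dyadic j k"
  have wm: "w \<in> borel_measurable lborel" by (rule weight_meas[OF w])
  have wnn: "\<And>x. 0 \<le> w x" using w by (simp add: weight_def)
  obtain a b where ab: "?X \<subseteq> {a..b}" using dyadic_bounded by blast
  have si: "set_integrable lborel ?X w"
    by (rule set_integrable_subset[OF _ dyadic_sets ab]) (use w in \<open>simp add: weight_def\<close>)
  have "ennreal (wmeas w ?X) = (\<integral>\<^sup>+x. ennreal (indicator ?X x *\<^sub>R w x) \<partial>lborel)"
    unfolding wmeas_def set_lebesgue_integral_def
    by (rule nn_integral_eq_integral[symmetric]) (use si wnn in \<open>auto simp: set_integrable_def\<close>)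
  also have "\<dots> = (\<integral>\<^sup>+x. ennreal (w x) * indicator ?X x \<partial>lborel)"
    by (intro nn_integral_cong) (simp split: split_indicator)
  also have "\<dots> = (\<integral>\<^sup>+t. emeasure lborel {x\<in>?X. t < w x} * indicator {0<..} t \<partial>lborel)"
    by (rule layer_cake[OF wm wnn dyadic_sets])
  also have "\<dots> = (\<integral>\<^sup>+t. ennreal (pw j) * (ennreal (Ndist w ?X t) * indicator {0<..} t) \<partial>lborel)"
  proof (intro nn_integral_cong)
    fix t
    have "emeasure lborel {x\<in>?X. t < w x} = ennreal (measure lborel {x\<in>?X. t < w x})"
      using lev_emeas_fin[OF w] by (simp add: emeasure_eq_ennreal_measure)
    also have "measure lborel {x\<in>?X. t < w x} = pw j * Ndist w ?X t"
      using pw_pos[of j] by (simp add: Ndist_def measure_dyadic)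
    also have "ennreal (pw j * Ndist w ?X t) = ennreal (pw j) * ennreal (Ndist w ?X t)"
      using pw_pos[of j] Nd_range[OF w, of j k t] by (simp add: ennreal_mult)
    finally show "emeasure lborel {x\<in>?X. t < w x} * indicator {0<..} t = ennreal (pw j) * (ennreal (Ndist w ?X t) * indicator {0<..} t)"
      by (simp add: mult.assoc)
  qed
  also have "\<dots> = ennreal (pw j) * (\<integral>\<^sup>+t. ennreal (Ndist w ?X t) * indicator {0<..} t \<partial>lborel)"
    by (rule nn_integral_cmult) (use Nd_meas[OF w] in measurable)
  finally have E: "ennreal (wmeas w ?X) = ennreal (pw j) * (\<integral>\<^sup>+t. ennreal (Ndist w ?X t) * indicator {0<..} t \<partial>lborel)" .
  have "(\<integral>\<^sup>+t. ennreal (Ndist w ?X t) * indicator {0<..} t \<partial>lborel)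
      = ennreal (1 / pw j) * (ennreal (pw j) * (\<integral>\<^sup>+t. ennreal (Ndist w ?X t) * indicator {0<..} t \<partial>lborel))"
    using pw_pos[of j] by (simp add: mult.assoc[symmetric] ennreal_mult[symmetric])
  also have "\<dots> = ennreal (1 / pw j) * ennreal (wmeas w ?X)" by (simp only: E)
  also have "\<dots> = ennreal (avg w ?X)"
    using pw_pos[of j] by (simp add: avg_def measure_dyadic ennreal_mult'[symmetric])
  finally show ?thesis .
qed


lemma ht_nonneg:
  assumes pos: "\<forall>s. 0 < s \<and> s \<le> 1 \<longrightarrow> 0 < \<Psi> s" and s: "0 \<le> s" "s \<le> 1"
  shows "0 \<le> ht \<Psi> s"
  using pos s by (auto simp: ht_def intro!: mult_nonneg_nonneg less_imp_le)

lemma ht_mono: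
  assumes pos: "\<forall>s. 0 < s \<and> s \<le> 1 \<longrightarrow> 0 < \<Psi> s"
    and incr: "\<forall>s t. 0 < s \<and> s \<le> t \<and> t \<le> 1 \<longrightarrow> s * \<Psi> s \<le> t * \<Psi> t"
    and s: "0 \<le> s" "s \<le> t" "t \<le> 1"
  shows "ht \<Psi> s \<le> ht \<Psi> t"
proof (cases "s = 0")
  case True thus ?thesis using ht_nonneg[OF pos, of t] s by (simp add: ht_def)
next
  case False
  hence "0 < s" "t \<noteq> 0" using s by auto
  thus ?thesis using incr s False by (auto simp: ht_def)
qed

lemma FF_concave:
  assumes "summable c" "\<And>k. 0 \<le> c k" "0 \<le> a" "0 \<le> b"
  shows "(FF c a + FF c b)/2 \<le> FF c ((a+b)/2)"
  using FF_defect[OF assms, of 0] phi_concave[OF hk_pos assms(3,4), of 0] assms(2)[of 0]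
  by (smt (verit) mult_nonneg_nonneg)

lemma avg_nonneg: "weight w \<Longrightarrow> 0 \<le> avg w (dyadic j k)"
  unfolding avg_def wmeas_def set_lebesgue_integral_def
  by (intro divide_nonneg_nonneg Bochner_Integration.integral_nonneg) (auto simp: weight_def)

definition BB :: "(nat \<Rightarrow> real) \<Rightarrow> (real \<Rightarrow> real) \<Rightarrow> int \<Rightarrow> int \<Rightarrow> real" where
  "BB c w j k = enn2real (\<integral>\<^sup>+t. ennreal (FF c (Ndist w (dyadic j k) t)) * indicator {0<..} t \<partial>lborel)"

lemma FFN_meas:
  assumes "weight w" "summable c" "\<And>k. 0 \<le> c k"
  shows "(\<lambda>t. FF c (Ndist w (dyadic j k) t)) \<in> borel_measurable lborel"
proof (rule anti_meas)
  fix t t' :: real assume "t \<le> t'"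
  show "FF c (Ndist w (dyadic j k) t') \<le> FF c (Ndist w (dyadic j k) t)"
    by (rule FF_mono[OF assms(2,3) Nd_anti[OF assms(1) \<open>t \<le> t'\<close>]])
qed

lemma BB_props:
  assumes w: "weight w" and sc: "summable c" and cnn: "\<And>k. 0 \<le> c k"
  shows "(\<integral>\<^sup>+t. ennreal (FF c (Ndist w (dyadic j k) t)) * indicator {0<..} t \<partial>lborel) = ennreal (BB c w j k)"
    and "0 \<le> BB c w j k" "BB c w j k \<le> suminf c * avg w (dyadic j k)"
proof -
  let ?N = "\<lambda>t. Ndist w (dyadic j k) t"
  have "(\<integral>\<^sup>+t. ennreal (FF c (?N t)) * indicator {0<..} t \<partial>lborel)
      \<le> (\<integral>\<^sup>+t. ennreal (suminf c) * (ennreal (?N t) * indicator {0<..} t) \<partial>lborel)"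
  proof (rule nn_integral_mono)
    fix t
    have "FF c (?N t) \<le> suminf c * ?N t" by (rule FF_le[OF sc cnn Nd_range(1)[OF w]])
    hence "ennreal (FF c (?N t)) \<le> ennreal (suminf c) * ennreal (?N t)"
      using suminf_nonneg[OF sc cnn] by (simp add: ennreal_mult[symmetric] Nd_range[OF w])
    thus "ennreal (FF c (?N t)) * indicator {0<..} t \<le> ennreal (suminf c) * (ennreal (?N t) * indicator {0<..} t)"
      by (simp add: indicator_def)
  qed
  also have "\<dots> = ennreal (suminf c) * ennreal (avg w (dyadic j k))"
  proof -
    have m: "(\<lambda>t. ennreal (?N t) * indicator {0<..} t) \<in> borel_measurable lborel"
      using Nd_meas[OF w, of j k] by measurable
    show ?thesis by (simp only: nn_integral_cmult[OF m] Nd_int[OF w])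
  qed
  finally have le: "(\<integral>\<^sup>+t. ennreal (FF c (?N t)) * indicator {0<..} t \<partial>lborel) \<le> ennreal (suminf c * avg w (dyadic j k))"
    using suminf_nonneg[OF sc cnn] by (simp add: ennreal_mult')
  have fin: "(\<integral>\<^sup>+t. ennreal (FF c (?N t)) * indicator {0<..} t \<partial>lborel) < \<infinity>"
    using le_less_trans[OF le ennreal_less_top] by simp
  show eq: "(\<integral>\<^sup>+t. ennreal (FF c (?N t)) * indicator {0<..} t \<partial>lborel) = ennreal (BB c w j k)"
    unfolding BB_def using fin by (simp add: less_top)
  show "0 \<le> BB c w j k" by (simp add: BB_def)
  show "BB c w j k \<le> suminf c * avg w (dyadic j k)"
    using le unfolding eq
    using avg_nonneg[OF w, of j k] suminf_nonneg[OF sc cnn] by simp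
qed


definition II :: "(real \<Rightarrow> real) \<Rightarrow> ennreal" where
  "II f = (\<integral>\<^sup>+t. ennreal (f t) * indicator {0<..} t \<partial>lborel)"

lemma II_mono: "(\<And>t. f t \<le> g t) \<Longrightarrow> II f \<le> II g"
  unfolding II_def by (intro nn_integral_mono) (simp add: ennreal_leI mult_right_mono)

lemma II_add:
  assumes "f \<in> borel_measurable lborel" "g \<in> borel_measurable lborel" "\<And>t. 0 \<le> f t" "\<And>t. 0 \<le> g t"
  shows "II (\<lambda>t. f t + g t) = II f + II g"
proof -
  have "II (\<lambda>t. f t + g t) = (\<integral>\<^sup>+t. ennreal (f t) * indicator {0<..} t + ennreal (g t) * indicator {0<..} t \<partial>lborel)"
    unfolding II_def using assms(3,4) by (intro nn_integral_cong) (simp add: distrib_right)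
  also have "\<dots> = II f + II g"
  proof -
    have [measurable]: "f \<in> borel_measurable lborel" "g \<in> borel_measurable lborel" using assms(1,2) by auto
    have m1: "(\<lambda>t. ennreal (f t) * indicator {0<..} t) \<in> borel_measurable lborel" by measurable
    have m2: "(\<lambda>t. ennreal (g t) * indicator {0<..} t) \<in> borel_measurable lborel" by measurable
    show ?thesis unfolding II_def by (rule nn_integral_add[OF m1 m2])
  qed
  finally show ?thesis .
qed

lemma II_cmult:
  assumes "f \<in> borel_measurable lborel" "0 \<le> c"
  shows "II (\<lambda>t. c * f t) = ennreal c * II f"
proof -
  have "II (\<lambda>t. c * f t) = (\<integral>\<^sup>+t. ennreal c * (ennreal (f t) * indicator {0<..} t) \<partial>lborel)"
    unfolding II_def using assms(2) by (intro nn_integral_cong) (simp add: ennreal_mult' mult.assoc)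
  also have "\<dots> = ennreal c * II f"
  proof -
    have [measurable]: "f \<in> borel_measurable lborel" using assms(1) by auto
    have m1: "(\<lambda>t. ennreal (f t) * indicator {0<..} t) \<in> borel_measurable lborel" by measurable
    show ?thesis unfolding II_def by (rule nn_integral_cmult[OF m1])
  qed
  finally show ?thesis .
qed

lemma II_cong: "(\<And>t. f t = g t) \<Longrightarrow> II f = II g" by (simp add: II_def)


lemma enn_le_real: "ennreal a \<le> ennreal b \<Longrightarrow> 0 \<le> b \<Longrightarrow> a \<le> b" by simp

lemma interval_ineq:
  fixes \<Psi> :: "real \<Rightarrow> real"
  assumes pos: "\<forall>s. 0 < s \<and> s \<le> 1 \<longrightarrow> 0 < \<Psi> s"
    and decr: "\<forall>s t. 0 < s \<and> s \<le> t \<and> t \<le> 1 \<longrightarrow> \<Psi> t \<le> \<Psi> s"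
    and incr: "\<forall>s t. 0 < s \<and> s \<le> t \<and> t \<le> 1 \<longrightarrow> s * \<Psi> s \<le> t * \<Psi> t"
    and c: "c = (\<lambda>k. 1 / \<Psi> (hk k))" and sc: "summable c"
    and w: "weight w" and fin: "nPsi \<Psi> (Ndist w (dyadic j k)) < \<infinity>"
  shows "BB c w (j+1) (2*k) + BB c w (j+1) (2*k+1) \<le> 2 * BB c w j k"
    and "ennreal ((Delta w j k)^2 * measure lborel (dyadic j k) / enn2real (nPsi \<Psi> (Ndist w (dyadic j k))))
         \<le> ennreal (32 * pw j * (BB c w j k - (BB c w (j+1) (2*k) + BB c w (j+1) (2*k+1))/2))"
proof -
  have cnn: "\<And>k. 0 \<le> c k" using pos hk_pos hk_le1 unfolding c by (simp add: less_imp_le)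
  define N where "N = Ndist w (dyadic j k)"
  define A where "A = Ndist w (dyadic (j+1) (2*k))"
  define B where "B = Ndist w (dyadic (j+1) (2*k+1))"
  define BI where "BI = BB c w j k"
  define BL where "BL = BB c w (j+1) (2*k)"
  define BR where "BR = BB c w (j+1) (2*k+1)"
  have Nh: "\<And>t. N t = (A t + B t)/2" unfolding N_def A_def B_def by (rule Nd_half[OF w])
  have rA: "\<And>t. 0 \<le> A t" "\<And>t. A t \<le> 1" unfolding A_def using Nd_range[OF w] by auto
  have rB: "\<And>t. 0 \<le> B t" "\<And>t. B t \<le> 1" unfolding B_def using Nd_range[OF w] by auto
  have rN: "\<And>t. 0 \<le> N t" "\<And>t. N t \<le> 1" unfolding N_def using Nd_range[OF w] by auto
  have mA[measurable]: "A \<in> borel_measurable lborel" unfolding A_def by (rule Nd_meas[OF w])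
  have mB[measurable]: "B \<in> borel_measurable lborel" unfolding B_def by (rule Nd_meas[OF w])
  have mFN: "(\<lambda>t. FF c (N t)) \<in> borel_measurable lborel" unfolding N_def by (rule FFN_meas[OF w sc cnn])
  have mFA: "(\<lambda>t. FF c (A t)) \<in> borel_measurable lborel" unfolding A_def by (rule FFN_meas[OF w sc cnn])
  have mFB: "(\<lambda>t. FF c (B t)) \<in> borel_measurable lborel" unfolding B_def by (rule FFN_meas[OF w sc cnn])
  have mhN: "(\<lambda>t. ht \<Psi> (N t)) \<in> borel_measurable lborel"
  proof (rule anti_meas)
    fix t t' :: real assume "t \<le> t'"
    hence "N t' \<le> N t" unfolding N_def by (rule Nd_anti[OF w])
    thus "ht \<Psi> (N t') \<le> ht \<Psi> (N t)" using rN by (intro ht_mono[OF pos incr]) auto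
  qed
  have mD: "(\<lambda>t. \<bar>B t - A t\<bar>) \<in> borel_measurable lborel" by measurable
  have IFN: "II (\<lambda>t. FF c (N t)) = ennreal BI" unfolding II_def N_def BI_def by (rule BB_props(1)[OF w sc cnn])
  have IFA: "II (\<lambda>t. FF c (A t)) = ennreal BL" unfolding II_def A_def BL_def by (rule BB_props(1)[OF w sc cnn])
  have IFB: "II (\<lambda>t. FF c (B t)) = ennreal BR" unfolding II_def B_def BR_def by (rule BB_props(1)[OF w sc cnn])
  have BIn: "0 \<le> BI" "0 \<le> BL" "0 \<le> BR" unfolding BI_def BL_def BR_def using BB_props(2)[OF w sc cnn] by auto
  have IA: "II A = ennreal (avg w (dyadic (j+1) (2*k)))" unfolding II_def A_def by (rule Nd_int[OF w])
  have IB: "II B = ennreal (avg w (dyadic (j+1) (2*k+1)))" unfolding II_def B_def by (rule Nd_int[OF w])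
  have avn: "0 \<le> avg w (dyadic (j+1) (2*k))" "0 \<le> avg w (dyadic (j+1) (2*k+1))" using avg_nonneg[OF w] by auto
  define P where "P = enn2real (nPsi \<Psi> N)"
  have nP: "nPsi \<Psi> N = II (\<lambda>t. ht \<Psi> (N t))" by (simp add: nPsi_def II_def ht_def)
  have Pn: "0 \<le> P" by (simp add: P_def)
  have eP: "nPsi \<Psi> N = ennreal P" using fin unfolding P_def N_def by (simp add: less_top)
  have FFn: "\<And>t. 0 \<le> FF c t" by (rule FF_nonneg[OF sc cnn])
  have htn: "\<And>t. 0 \<le> ht \<Psi> (N t)" using rN by (intro ht_nonneg[OF pos]) auto
  have "II (\<lambda>t. FF c (A t) + FF c (B t)) \<le> II (\<lambda>t. 2 * FF c (N t))"
  proof (rule II_mono)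
    fix t
    have "(FF c (A t) + FF c (B t))/2 \<le> FF c ((A t + B t)/2)" by (rule FF_concave[OF sc cnn rA(1) rB(1)])
    thus "FF c (A t) + FF c (B t) \<le> 2 * FF c (N t)" by (simp add: Nh)
  qed
  hence "ennreal BL + ennreal BR \<le> ennreal 2 * ennreal BI"
    by (simp add: II_add[OF mFA mFB FFn FFn] II_cmult[OF mFN] IFA IFB IFN)
  hence "ennreal (BL + BR) \<le> ennreal (2 * BI)" using BIn by (simp add: ennreal_mult')
  hence conc: "BL + BR \<le> 2 * BI" by (rule enn_le_real) (use BIn in simp)
  thus "BB c w (j+1) (2*k) + BB c w (j+1) (2*k+1) \<le> 2 * BB c w j k" by (simp add: BI_def BL_def BR_def)
  define X where "X = II (\<lambda>t. \<bar>B t - A t\<bar>)"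
  have main: "X + ennreal (8*lam*BL + 8*lam*BR) \<le> ennreal (16*lam*BI + P/(2*lam))" if lam: "0 < lam" for lam
  proof -
    have "II (\<lambda>t. \<bar>B t - A t\<bar> + ((8*lam) * FF c (A t) + (8*lam) * FF c (B t)))
        \<le> II (\<lambda>t. (16*lam) * FF c (N t) + (1/(2*lam)) * ht \<Psi> (N t))"
    proof (rule II_mono)
      fix t
      have "\<bar>B t - A t\<bar> + (lam*16) * ((FF c (A t) + FF c (B t))/2) \<le> (lam*16) * FF c ((A t + B t)/2) + ht \<Psi> ((A t + B t)/2) / (2*lam)"
        by (rule key_point[OF pos decr c sc rA(1) rA(2) rB(1) rB(2) lam])
      moreover have "(lam*16) * ((FF c (A t) + FF c (B t))/2) = (8*lam) * FF c (A t) + (8*lam) * FF c (B t)"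
        by (simp add: field_simps)
      moreover have "ht \<Psi> ((A t + B t)/2) / (2*lam) = (1/(2*lam)) * ht \<Psi> (N t)" by (simp add: Nh)
      moreover have "(lam*16) * FF c ((A t + B t)/2) = (16*lam) * FF c (N t)" by (simp add: Nh)
      ultimately show "\<bar>B t - A t\<bar> + ((8*lam) * FF c (A t) + (8*lam) * FF c (B t)) \<le> (16*lam) * FF c (N t) + (1/(2*lam)) * ht \<Psi> (N t)"
        by linarith
    qed
    moreover have "II (\<lambda>t. \<bar>B t - A t\<bar> + ((8*lam) * FF c (A t) + (8*lam) * FF c (B t)))
        = X + (ennreal (8*lam) * ennreal BL + ennreal (8*lam) * ennreal BR)"
    proof -
      have m1: "(\<lambda>t. (8*lam) * FF c (A t)) \<in> borel_measurable lborel" using mFA by measurable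
      have m2: "(\<lambda>t. (8*lam) * FF c (B t)) \<in> borel_measurable lborel" using mFB by measurable
      have m12: "(\<lambda>t. (8*lam) * FF c (A t) + (8*lam) * FF c (B t)) \<in> borel_measurable lborel" using m1 m2 by measurable
      have n1: "\<And>t. 0 \<le> (8*lam) * FF c (A t)" "\<And>t. 0 \<le> (8*lam) * FF c (B t)" using lam FFn by auto
      show ?thesis
        unfolding X_def
        by (simp add: II_add[OF mD m12] II_add[OF m1 m2 n1] II_cmult[OF mFA] II_cmult[OF mFB] IFA IFB lam less_imp_le n1 add_nonneg_nonneg)
    qed
    moreover have "II (\<lambda>t. (16*lam) * FF c (N t) + (1/(2*lam)) * ht \<Psi> (N t))
        = ennreal (16*lam) * ennreal BI + ennreal (1/(2*lam)) * ennreal P"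
    proof -
      have m1: "(\<lambda>t. (16*lam) * FF c (N t)) \<in> borel_measurable lborel" using mFN by measurable
      have m2: "(\<lambda>t. (1/(2*lam)) * ht \<Psi> (N t)) \<in> borel_measurable lborel" using mhN by measurable
      have n1: "\<And>t. 0 \<le> (16*lam) * FF c (N t)" "\<And>t. 0 \<le> (1/(2*lam)) * ht \<Psi> (N t)" using lam FFn htn by auto
      have a1: "II (\<lambda>t. (16*lam) * FF c (N t)) = ennreal (16*lam) * ennreal BI"
        using II_cmult[OF mFN, of "16*lam"] lam IFN by simp
      have a2: "II (\<lambda>t. (1/(2*lam)) * ht \<Psi> (N t)) = ennreal (1/(2*lam)) * ennreal P"
        using II_cmult[OF mhN, of "1/(2*lam)"] lam nP eP by simp
      show ?thesis by (simp only: II_add[OF m1 m2 n1] a1 a2)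
    qed
    ultimately have "X + (ennreal (8*lam) * ennreal BL + ennreal (8*lam) * ennreal BR)
        \<le> ennreal (16*lam) * ennreal BI + ennreal (1/(2*lam)) * ennreal P" by simp
    moreover have "ennreal (8*lam*BL + 8*lam*BR) = ennreal (8*lam) * ennreal BL + ennreal (8*lam) * ennreal BR"
      using lam BIn by (simp add: ennreal_mult)
    moreover have "ennreal (16*lam*BI + P/(2*lam)) = ennreal (16*lam) * ennreal BI + ennreal (1/(2*lam)) * ennreal P"
      using lam BIn Pn by (simp add: ennreal_mult ennreal_mult'[symmetric])
    ultimately show ?thesis by simp
  qed
  have "X \<le> X + ennreal (8*1*BL + 8*1*BR)" by simp
  also have "\<dots> \<le> ennreal (16*1*BI + P/(2*1))" by (rule main) simp
  finally have "X < \<infinity>" using le_less_trans[OF _ ennreal_less_top] by simp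
  then obtain x where x: "X = ennreal x" "0 \<le> x" by (cases X) auto
  have mainr: "x + 8*lam*BL + 8*lam*BR \<le> 16*lam*BI + P/(2*lam)" if "0 < lam" for lam
  proof -
    have "ennreal (x + (8*lam*BL + 8*lam*BR)) \<le> ennreal (16*lam*BI + P/(2*lam))"
      using main[OF that] x BIn that by simp
    moreover have "0 \<le> 16*lam*BI + P/(2*lam)" using that BIn Pn by simp
    ultimately have "x + (8*lam*BL + 8*lam*BR) \<le> 16*lam*BI + P/(2*lam)" by (rule enn_le_real)
    thus ?thesis by simp
  qed
  have "II B \<le> II (\<lambda>t. A t + \<bar>B t - A t\<bar>)" by (intro II_mono) simp
  also have "\<dots> = II A + X" unfolding X_def by (rule II_add[OF mA mD rA(1)]) simp
  finally have "ennreal (avg w (dyadic (j+1) (2*k+1))) \<le> ennreal (avg w (dyadic (j+1) (2*k)) + x)"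
    using IA IB x avn by simp
  hence d1: "avg w (dyadic (j+1) (2*k+1)) \<le> avg w (dyadic (j+1) (2*k)) + x" by (rule enn_le_real) (use avn x in simp)
  have "II A \<le> II (\<lambda>t. B t + \<bar>B t - A t\<bar>)" by (intro II_mono) simp
  also have "\<dots> = II B + X" unfolding X_def by (rule II_add[OF mB mD rB(1)]) simp
  finally have "ennreal (avg w (dyadic (j+1) (2*k))) \<le> ennreal (avg w (dyadic (j+1) (2*k+1)) + x)"
    using IA IB x avn by simp
  hence d2: "avg w (dyadic (j+1) (2*k)) \<le> avg w (dyadic (j+1) (2*k+1)) + x" by (rule enn_le_real) (use avn x in simp)
  define D where "D = Delta w j k"
  have Dx: "\<bar>D\<bar> \<le> x" using d1 d2 by (simp add: D_def Delta_def)
  define Q where "Q = BI - (BL + BR)/2"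
  have DQ: "\<bar>D\<bar> \<le> 16*lam*Q + P/(2*lam)" if "0 < lam" for lam
  proof -
    have "16*lam*Q = 16*lam*BI - 8*lam*BL - 8*lam*BR" by (simp add: Q_def field_simps)
    thus ?thesis using mainr[OF that] Dx by linarith
  qed
  have fin_ineq: "D^2 * pw j / P \<le> 32 * pw j * Q"
  proof (cases "P = 0 \<or> D = 0")
    case True
    have "0 \<le> Q" using conc by (simp add: Q_def)
    thus ?thesis using True pw_pos[of j] by auto
  next
    case False
    hence Pp: "0 < P" and Dp: "0 < \<bar>D\<bar>" using Pn by auto
    have "\<bar>D\<bar> \<le> 16*(P/\<bar>D\<bar>)*Q + P/(2*(P/\<bar>D\<bar>))" using DQ[of "P/\<bar>D\<bar>"] Pp Dp by simp
    also have "P/(2*(P/\<bar>D\<bar>)) = \<bar>D\<bar>/2" using Pp Dp by (simp add: field_simps)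
    finally have "\<bar>D\<bar>/2 \<le> 16*(P/\<bar>D\<bar>)*Q" by simp
    hence "\<bar>D\<bar> * \<bar>D\<bar> \<le> 32 * P * Q" using Dp by (simp add: field_simps)
    hence "D^2 \<le> 32 * P * Q" by (simp add: power2_eq_square)
    hence "D^2 / P \<le> 32 * Q" using Pp by (simp add: field_simps)
    hence "D^2 / P * pw j \<le> 32 * Q * pw j" using pw_pos[of j] by (intro mult_right_mono) auto
    thus ?thesis by (simp add: field_simps)
  qed
  show "ennreal ((Delta w j k)^2 * measure lborel (dyadic j k) / enn2real (nPsi \<Psi> (Ndist w (dyadic j k))))
         \<le> ennreal (32 * pw j * (BB c w j k - (BB c w (j+1) (2*k) + BB c w (j+1) (2*k+1))/2))"
    using fin_ineq unfolding D_def P_def N_def Q_def BI_def BL_def BR_def measure_dyadic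
    by (rule ennreal_leI)
qed


definition DD :: "nat \<Rightarrow> int \<Rightarrow> int \<Rightarrow> (int \<times> int) set" where
  "DD n j k = {(a,b). \<exists>i<n. a = j + int i \<and> k * 2^i \<le> b \<and> b < (k+1) * 2^i}"

lemma DD_0: "DD 0 j k = {}" by (simp add: DD_def)

lemma DD_mono: "n \<le> m \<Longrightarrow> DD n j k \<subseteq> DD m j k"
  unfolding DD_def by force

lemma split_range:
  fixes k b p :: int
  assumes "0 < p"
  shows "(k * (2*p) \<le> b \<and> b < (k+1) * (2*p)) \<longleftrightarrow>
         ((2*k) * p \<le> b \<and> b < (2*k+1) * p) \<or> ((2*k+1) * p \<le> b \<and> b < (2*k+1+1) * p)"
proof -
  have e1: "k * (2*p) = (2*k)*p" "(k+1) * (2*p) = (2*k+1)*p + p" "(2*k+1+1)*p = (2*k+1)*p + p"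
    by (simp_all add: algebra_simps)
  have e2: "(2*k+1)*p = 2*k*p + p" by (simp add: algebra_simps)
  show ?thesis unfolding e1 e2 using assms by auto
qed

lemma DD_Suc: "DD (Suc n) j k = insert (j,k) (DD n (j+1) (2*k) \<union> DD n (j+1) (2*k+1))"
proof (intro set_eqI iffI)
  fix x assume "x \<in> DD (Suc n) j k"
  then obtain a b i where x: "x = (a,b)" "i < Suc n" "a = j + int i" "k * 2^i \<le> b" "b < (k+1) * 2^i"
    unfolding DD_def by blast
  show "x \<in> insert (j,k) (DD n (j+1) (2*k) \<union> DD n (j+1) (2*k+1))"
  proof (cases i)
    case 0 thus ?thesis using x by auto
  next
    case (Suc i')
    have p: "(0::int) < 2^i'" by simp
    have "(k * (2*2^i') \<le> b \<and> b < (k+1) * (2*2^i'))" using x Suc by simp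
    hence "((2*k) * 2^i' \<le> b \<and> b < (2*k+1) * 2^i') \<or> ((2*k+1) * 2^i' \<le> b \<and> b < (2*k+1+1) * 2^i')"
      using split_range[OF p] by blast
    moreover have "a = (j+1) + int i'" "i' < n" using x Suc by auto
    ultimately show ?thesis using x unfolding DD_def by auto
  qed
next
  fix x assume "x \<in> insert (j,k) (DD n (j+1) (2*k) \<union> DD n (j+1) (2*k+1))"
  then consider "x = (j,k)" | "x \<in> DD n (j+1) (2*k)" | "x \<in> DD n (j+1) (2*k+1)" by blast
  thus "x \<in> DD (Suc n) j k"
  proof cases
    case 1 thus ?thesis unfolding DD_def by (auto intro!: exI[of _ 0])
  next
    case 2
    then obtain a b i where x: "x = (a,b)" "i < n" "a = j + 1 + int i" "(2*k) * 2^i \<le> b" "b < (2*k+1) * 2^i"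
      unfolding DD_def by blast
    have p: "(0::int) < 2^i" by simp
    have "k * (2*2^i) \<le> b \<and> b < (k+1) * (2*2^i)" using split_range[OF p, of k b] x by blast
    thus ?thesis using x unfolding DD_def by (auto intro!: exI[of _ "Suc i"])
  next
    case 3
    then obtain a b i where x: "x = (a,b)" "i < n" "a = j + 1 + int i" "(2*k+1) * 2^i \<le> b" "b < (2*k+1+1) * 2^i"
      unfolding DD_def by (auto simp: add.assoc)
    have p: "(0::int) < 2^i" by simp
    have "k * (2*2^i) \<le> b \<and> b < (k+1) * (2*2^i)" using split_range[OF p, of k b] x by blast
    thus ?thesis using x unfolding DD_def by (auto intro!: exI[of _ "Suc i"])
  qed
qed

lemma DD_finite: "finite (DD n j k)"
  by (induction n arbitrary: j k) (simp_all add: DD_0 DD_Suc)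

lemma DD_fst: "(a,b) \<in> DD n j k \<Longrightarrow> j \<le> a"
  unfolding DD_def by auto

lemma DD_disj: "DD n (j+1) (2*k) \<inter> DD n (j+1) (2*k+1) = {}"
proof (rule ccontr)
  assume "DD n (j+1) (2*k) \<inter> DD n (j+1) (2*k+1) \<noteq> {}"
  then obtain a b where "(a,b) \<in> DD n (j+1) (2*k)" "(a,b) \<in> DD n (j+1) (2*k+1)" by auto
  then obtain i i' where "a = j + 1 + int i" "b < (2*k+1) * 2^i" "a = j + 1 + int i'" "(2*k+1) * 2^i' \<le> b"
    unfolding DD_def by auto
  thus False by auto
qed

lemma tree_sum:
  fixes T :: "int \<times> int \<Rightarrow> ennreal" and V :: "int \<Rightarrow> int \<Rightarrow> real"
  assumes T: "\<And>j k. T (j,k) \<le> ennreal (V j k - V (j+1) (2*k) - V (j+1) (2*k+1))"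
    and Vn: "\<And>j k. 0 \<le> V j k"
    and Vs: "\<And>j k. V (j+1) (2*k) + V (j+1) (2*k+1) \<le> V j k"
  shows "sum T (DD n j k) \<le> ennreal (V j k)"
proof (induction n arbitrary: j k)
  case 0 thus ?case by (simp add: DD_0)
next
  case (Suc n)
  have nin: "(j,k) \<notin> DD n (j+1) (2*k) \<union> DD n (j+1) (2*k+1)" using DD_fst by fastforce
  have "sum T (DD (Suc n) j k) = T (j,k) + (sum T (DD n (j+1) (2*k)) + sum T (DD n (j+1) (2*k+1)))"
    unfolding DD_Suc using nin DD_disj by (simp add: DD_finite sum.union_disjoint)
  also have "\<dots> \<le> ennreal (V j k - V (j+1) (2*k) - V (j+1) (2*k+1)) + (ennreal (V (j+1) (2*k)) + ennreal (V (j+1) (2*k+1)))"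
    by (intro add_mono T Suc.IH)
  also have "\<dots> = ennreal (V j k)"
    using Vn[of "j+1" "2*k"] Vn[of "j+1" "2*k+1"] Vs[of j k]
    by (simp flip: ennreal_plus)
  finally show ?case .
qed


lemma ivl_sub:
  fixes a b c d :: real
  assumes "{a..<b} \<subseteq> {c..<d}" "a < b"
  shows "c \<le> a \<and> b \<le> d"
proof -
  have "a \<in> {c..<d}" using assms by auto
  hence ca: "c \<le> a" by simp
  have "b \<le> d"
  proof (rule ccontr)
    assume "\<not> b \<le> d"
    hence "max a d \<in> {a..<b}" using assms(2) by auto
    hence "max a d < d" using assms(1) by auto
    thus False by simp
  qed
  thus ?thesis using ca by simp
qed

lemma pw_le_imp: "pw j' \<le> pw j \<Longrightarrow> j \<le> j'"
  unfolding pw_def by simp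

lemma pw_shift:
  assumes "j \<le> j'"
  shows "pw j = pw j' * 2 ^ nat (j' - j)"
proof -
  have e: "- real_of_int j = - real_of_int j' + real (nat (j' - j))" using assms by simp
  have "pw j = 2 powr (- real_of_int j') * 2 powr (real (nat (j' - j)))"
    unfolding pw_def e by (rule powr_add)
  also have "2 powr (real (nat (j' - j))) = 2 ^ nat (j' - j)" by (simp add: powr_realpow)
  finally show ?thesis by (simp add: pw_def)
qed

lemma cover:
  assumes "dyadic j' k' \<subseteq> dyadic j k"
  shows "\<exists>n. (j',k') \<in> DD n j k"
proof -
  define p where "p = pw j"
  define p' where "p' = pw j'"
  have pp: "0 < p'" "0 < p" using pw_pos p_def p'_def by auto
  have "{real_of_int k' * p' ..< (real_of_int k' + 1) * p'} \<subseteq> {real_of_int k * p ..< (real_of_int k + 1) * p}"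
    using assms unfolding dyadic_eq p_def p'_def .
  moreover have "real_of_int k' * p' < (real_of_int k' + 1) * p'" using pp by (simp add: algebra_simps)
  ultimately have le: "real_of_int k * p \<le> real_of_int k' * p'" "(real_of_int k' + 1) * p' \<le> (real_of_int k + 1) * p"
    using ivl_sub by blast+
  have "p' \<le> p" using le by (simp add: algebra_simps)
  hence jj: "j \<le> j'" unfolding p_def p'_def by (rule pw_le_imp)
  define i where "i = nat (j' - j)"
  have pe: "p = p' * 2^i" unfolding p_def p'_def i_def by (rule pw_shift[OF jj])
  have "(real_of_int k * 2^i) * p' \<le> real_of_int k' * p'" using le(1) unfolding pe by (simp add: mult_ac)
  hence "real_of_int k * 2^i \<le> real_of_int k'" using pp by simp
  hence l1: "k * 2^i \<le> k'" by (metis of_int_le_iff of_int_mult of_int_numeral of_int_power)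
  have "(real_of_int k' + 1) * p' \<le> ((real_of_int k + 1) * 2^i) * p'" using le(2) unfolding pe by (simp add: mult_ac)
  hence "real_of_int k' + 1 \<le> (real_of_int k + 1) * 2^i" using pp by simp
  hence "real_of_int (k' + 1) \<le> real_of_int ((k + 1) * 2^i)" by simp
  hence l2: "k' < (k+1) * 2^i" by linarith
  have "j' = j + int i" using jj by (simp add: i_def)
  hence "(j',k') \<in> DD (Suc i) j k" unfolding DD_def using l1 l2 by auto
  thus ?thesis by blast
qed


lemma final_bound:
  fixes T :: "int \<times> int \<Rightarrow> ennreal" and V :: "int \<Rightarrow> int \<Rightarrow> real"
  assumes T: "\<And>j k. T (j,k) \<le> ennreal (V j k - V (j+1) (2*k) - V (j+1) (2*k+1))"
    and Vn: "\<And>j k. 0 \<le> V j k"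
    and Vs: "\<And>j k. V (j+1) (2*k) + V (j+1) (2*k+1) \<le> V j k"
  shows "infsum T {(j,k). dyadic j k \<subseteq> dyadic jJ kJ} \<le> ennreal (V jJ kJ)"
proof (rule infsum_le_finite_sums)
  show "T summable_on {(j,k). dyadic j k \<subseteq> dyadic jJ kJ}"
    by (rule nonneg_summable_on_complete) simp
next
  fix F assume F: "finite F" "F \<subseteq> {(j,k). dyadic j k \<subseteq> dyadic jJ kJ}"
  define nf where "nf = (\<lambda>x. SOME n. x \<in> DD n jJ kJ)"
  have nf: "x \<in> DD (nf x) jJ kJ" if "x \<in> F" for x
  proof -
    obtain a b where x: "x = (a,b)" by (cases x)
    have "dyadic a b \<subseteq> dyadic jJ kJ" using F(2) that x by auto
    hence "\<exists>n. x \<in> DD n jJ kJ" using cover x by blast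
    thus ?thesis unfolding nf_def by (rule someI_ex)
  qed
  define n where "n = sum nf F"
  have sub: "F \<subseteq> DD n jJ kJ"
  proof
    fix x assume "x \<in> F"
    hence "nf x \<le> n" unfolding n_def using F(1) by (intro member_le_sum) auto
    thus "x \<in> DD n jJ kJ" using nf[OF \<open>x \<in> F\<close>] DD_mono by blast
  qed
  have "sum T F \<le> sum T (DD n jJ kJ)" by (rule sum_mono2[OF DD_finite sub]) simp
  also have "\<dots> \<le> ennreal (V jJ kJ)" by (rule tree_sum[OF T Vn Vs])
  finally show "sum T F \<le> ennreal (V jJ kJ)" .
qed

theorem theorem2p2:
  fixes \<Psi> :: "real \<Rightarrow> real"
  assumes pos: "\<forall>s. 0 < s \<and> s \<le> 1 \<longrightarrow> 0 < \<Psi> s"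
    and decr: "\<forall>s t. 0 < s \<and> s \<le> t \<and> t \<le> 1 \<longrightarrow> \<Psi> t \<le> \<Psi> s"
    and incr: "\<forall>s t. 0 < s \<and> s \<le> t \<and> t \<le> 1 \<longrightarrow> s * \<Psi> s \<le> t * \<Psi> t"
    and intfin: "(\<integral>\<^sup>+ s\<in>{0<..1}. ennreal (1 / (s * \<Psi> s)) \<partial>lborel) < \<infinity>"
  shows "\<exists>C::real. \<forall>w. weight w \<and> (\<forall>j k. nPsi \<Psi> (Ndist w (dyadic j k)) < \<infinity>) \<longrightarrow>
     (\<forall>jJ kJ.
       (\<Sum>\<^sub>\<infinity>(j,k)\<in>{(j,k). dyadic j k \<subseteq> dyadic jJ kJ}.
          (if (AE x in lborel. x \<in> dyadic j k \<longrightarrow> w x = 0) then 0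
           else ennreal ((Delta w j k)\<^sup>2 * measure lborel (dyadic j k)
                   / enn2real (nPsi \<Psi> (Ndist w (dyadic j k))))))
       \<le> ennreal (C * wmeas w (dyadic jJ kJ)))"
proof -
  define c where "c = (\<lambda>k. 1 / \<Psi> (hk k))"
  have sc: "summable c" unfolding c_def by (rule summable_c[OF pos incr intfin])
  have cnn: "\<And>k. 0 \<le> c k" using pos hk_pos hk_le1 unfolding c_def by (simp add: less_imp_le)
  define K where "K = suminf c"
  have Kn: "0 \<le> K" unfolding K_def by (rule suminf_nonneg[OF sc cnn])
  show ?thesis
  proof (intro exI[of _ "32*K"] allI impI)
    fix w jJ kJ
    assume H: "weight w \<and> (\<forall>j k. nPsi \<Psi> (Ndist w (dyadic j k)) < \<infinity>)"
    hence w: "weight w" and fin: "\<And>j k. nPsi \<Psi> (Ndist w (dyadic j k)) < \<infinity>" by auto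
    define V where "V = (\<lambda>j k. 32 * pw j * BB c w j k)"
    have eqV: "V j k - V (j+1) (2*k) - V (j+1) (2*k+1) = 32 * pw j * (BB c w j k - (BB c w (j+1) (2*k) + BB c w (j+1) (2*k+1))/2)" for j k
      unfolding V_def pw_Suc by (simp add: field_simps)
    have X: "ennreal ((Delta w j k)\<^sup>2 * measure lborel (dyadic j k) / enn2real (nPsi \<Psi> (Ndist w (dyadic j k))))
         \<le> ennreal (V j k - V (j+1) (2*k) - V (j+1) (2*k+1))" for j k
      unfolding eqV by (rule interval_ineq(2)[OF pos decr incr c_def sc w fin])
    have Vn: "\<And>j k. 0 \<le> V j k" unfolding V_def using BB_props(2)[OF w sc cnn] pw_pos
      by (simp add: less_imp_le)
    have Vs: "V (j+1) (2*k) + V (j+1) (2*k+1) \<le> V j k" for j k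
    proof -
      have "BB c w (j+1) (2*k) + BB c w (j+1) (2*k+1) \<le> 2 * BB c w j k"
        by (rule interval_ineq(1)[OF pos decr incr c_def sc w fin])
      hence "16 * pw j * (BB c w (j+1) (2*k) + BB c w (j+1) (2*k+1)) \<le> 16 * pw j * (2 * BB c w j k)"
        using pw_pos[of j] by (intro mult_left_mono) auto
      thus ?thesis unfolding V_def pw_Suc by (simp add: field_simps)
    qed
    have VJ: "V jJ kJ \<le> 32 * K * wmeas w (dyadic jJ kJ)"
    proof -
      have "BB c w jJ kJ \<le> K * avg w (dyadic jJ kJ)" unfolding K_def by (rule BB_props(3)[OF w sc cnn])
      hence "32 * pw jJ * BB c w jJ kJ \<le> 32 * pw jJ * (K * avg w (dyadic jJ kJ))"
        using pw_pos[of jJ] by (intro mult_left_mono) auto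
      also have "\<dots> = 32 * K * wmeas w (dyadic jJ kJ)"
        using pw_pos[of jJ] by (simp add: avg_def measure_dyadic)
      finally show ?thesis by (simp add: V_def)
    qed
    show "(\<Sum>\<^sub>\<infinity>(j,k)\<in>{(j,k). dyadic j k \<subseteq> dyadic jJ kJ}.
          (if (AE x in lborel. x \<in> dyadic j k \<longrightarrow> w x = 0) then 0
           else ennreal ((Delta w j k)\<^sup>2 * measure lborel (dyadic j k)
                   / enn2real (nPsi \<Psi> (Ndist w (dyadic j k))))))
       \<le> ennreal (32 * K * wmeas w (dyadic jJ kJ))"
      apply (rule order_trans[OF final_bound[of _ V, OF _ Vn Vs]])
      subgoal for j k using X[of j k] by simp
      using VJ by (rule ennreal_leI)
  qed
qed


end
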